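(* Let $Q\in\mathcal{H}[1,1]$ and $\alpha\geq 0$, $\beta>0$ be such that $$|Q(z)-1|<\operatorname{Re}(Q(z)-1)+\frac{1}{2(\sqrt{2}\beta+\alpha)}\qquad(z\in\mathbb{D}).$$ Suppose $p$ is analytic in $\mathbb{D}$ with $p(0)=1$. Then $$p(z)Q(z)+\frac{zp'(z)}{\beta p(z)+\alpha}\prec\sqrt{1+z}\quad\Longrightarrow\quad p(z)\prec\sqrt{1+z}.$$
   Context: $\mathbb{D}$ is the open unit disk. $\mathcal{H}[1,1]$ is the class of functions analytic in $\mathbb{D}$ of the form $1+a_1z+\cdots$. $\sqrt{1+z}$ is the principal branch (equal to $1$ at $0$). $f\prec F$ means $f=F\circ\omega$ for some analytic $\omega:\mathbb{D}\to\mathbb{D}$ with $\omega(0)=0$. *)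

theory Defs
  imports "HOL-Complex_Analysis.Complex_Analysis"
begin

definition subordinate :: "(complex \<Rightarrow> complex) \<Rightarrow> (complex \<Rightarrow> complex) \<Rightarrow> bool"
  (infix "\<prec>\<^sub>D" 50) where
  "f \<prec>\<^sub>D F \<longleftrightarrow> (\<exists>\<omega>. \<omega> holomorphic_on ball 0 1 \<and> \<omega> ` ball 0 1 \<subseteq> ball 0 1 \<and> \<omega> 0 = 0
      \<and> (\<forall>z\<in>ball 0 1. f z = F (\<omega> z)))"

definition H11 :: "(complex \<Rightarrow> complex) set" where
  "H11 = {Q. Q holomorphic_on ball 0 1 \<and> Q 0 = 1}"

end

theory Submission
  imports Defs
begin

lemma conv_real:
  fixes X Y S :: real
  assumes "X > 0" "X^2 - Y^2 + 4*S*X*Y > (X^2+Y^2)^2"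
  shows "X - 2*S*Y < 1"
proof (rule ccontr)
  assume "\<not> X - 2*S*Y < 1"
  hence "2*S*Y \<le> X - 1" by simp
  hence "2*X*(2*S*Y) \<le> 2*X*(X-1)" using assms(1) by (intro mult_left_mono) auto
  hence "X^2 - Y^2 + 4*S*X*Y \<le> 3*X^2 - 2*X - Y^2" by (simp add: algebra_simps power2_eq_square)
  moreover have "(X^2+Y^2)^2 - (3*X^2 - 2*X - Y^2) = X*(X-1)^2*(X+2) + Y^2*(1+2*X^2+Y^2)"
    by (simp add: algebra_simps power2_eq_square power4_eq_xxxx)
  moreover have "X*(X-1)^2*(X+2) + Y^2*(1+2*X^2+Y^2) \<ge> 0" using assms(1) by simp
  ultimately show False using assms(2) by linarith
qed

lemma conv_cplx:
  fixes E w :: complex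
  assumes "Re E = 1/2" "Re w > 0" "Re (E / w^2) > 1/2"
  shows "Re (w * E) < 1/2"
proof -
  define X where "X = Re w" define Y where "Y = Im w" define S where "S = Im E"
  have w: "w = Complex X Y" and E: "E = Complex (1/2) S" using assms(1) by (auto simp: X_def Y_def S_def complex_eq_iff)
  have nz: "X^2+Y^2 > 0" using assms(2) X_def by (simp add: add_pos_nonneg)
  have w2: "w^2 = Complex (X^2-Y^2) (2*X*Y)" unfolding w by (simp add: power2_eq_square complex_eq_iff)
  have d: "(X^2-Y^2)^2 + (2*X*Y)^2 = (X^2+Y^2)^2" by (simp add: power2_eq_square algebra_simps)
  have "Re (E / w^2) = ((1/2)*(X^2-Y^2) + S*(2*X*Y)) / ((X^2-Y^2)^2 + (2*X*Y)^2)"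
    unfolding w2 E by (simp add: Re_divide power2_eq_square)
  also have "... = ((X^2-Y^2)/2 + 2*S*X*Y) / (X^2+Y^2)^2" unfolding d by simp
  finally have "Re (E / w^2) = ((X^2-Y^2)/2 + 2*S*X*Y) / (X^2+Y^2)^2" .
  moreover have D: "(X^2+Y^2)^2 > 0" using nz by (intro zero_less_power)
  ultimately have "1/2 < ((X^2-Y^2)/2 + 2*S*X*Y) / (X^2+Y^2)^2" using assms(3) by simp
  hence "(X^2-Y^2)/2 + 2*S*X*Y > (X^2+Y^2)^2/2"
    using D by (simp add: less_divide_eq)
  moreover have "4*S*X*Y = 2*(2*S*X*Y)" by simp
  ultimately have "X^2 - Y^2 + 4*S*X*Y > (X^2+Y^2)^2" by argo
  from conv_real[OF _ this] assms(2) have "X - 2*S*Y < 1" by (simp add: X_def)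
  moreover have "Re (w*E) = X/2 - S*Y" unfolding w E by simp
  ultimately show ?thesis by simp
qed
lemma Re_inv_half:
  fixes z :: complex
  assumes "cmod (z - 1) < 1"
  shows "Re (1/z) > 1/2" "Re z > 0" "z \<noteq> 0"
proof -
  have "cmod (z-1)^2 < 1^2" using assms by (intro power_strict_mono) auto
  hence h: "(Re z - 1)^2 + (Im z)^2 < 1" by (simp add: cmod_power2)
  hence n: "(Re z)^2 + (Im z)^2 < 2 * Re z" by (simp add: power2_eq_square algebra_simps)
  show "Re z > 0" using n by (smt (verit) sum_power2_ge_zero)
  then show "z \<noteq> 0" by auto
  have "Re (1/z) = Re z / ((Re z)^2 + (Im z)^2)" by (simp add: Re_divide power2_eq_square)
  moreover have "(Re z)^2 + (Im z)^2 > 0" using \<open>Re z > 0\<close> by (simp add: add_pos_nonneg)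
  ultimately show "Re (1/z) > 1/2" using n by (simp add: less_divide_eq)
qed

lemma core:
  fixes u p v \<psi> :: complex and k \<alpha> \<beta> :: real
  assumes u1: "cmod u = 1" and pu: "p^2 = 1 + u" and rp: "Re p > 0" and k: "k \<ge> 1"
    and al: "\<alpha> \<ge> 0" and be: "\<beta> > 0"
    and v: "cmod v < Re v + 1 / (2 * (sqrt 2 * \<beta> + \<alpha>))"
    and ps: "\<psi> = p * (1 + v) + of_real k * u / (2 * p * (of_real \<beta> * p + of_real \<alpha>))"
    and rps: "Re \<psi> \<ge> 0" and sps: "cmod (\<psi>^2 - 1) < 1"
  shows False
proof -
  define c where "c = 1 / (2 * (sqrt 2 * \<beta> + \<alpha>))"
  define a where "a = Re p" define b where "b = Im p"
  have R: "sqrt 2 * \<beta> + \<alpha> > 0" using al be by (simp add: add_pos_nonneg)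
  have c0: "c > 0" using R by (simp add: c_def)
  have uu: "(Re u)^2 + (Im u)^2 = 1" using u1 by (metis cmod_power2 one_power2)
  have p0: "p \<noteq> 0" using rp by auto
  have u_ne: "Re u \<noteq> -1"
  proof
    assume "Re u = -1" hence "Im u = 0" using uu by simp
    hence "u = -1" using \<open>Re u = -1\<close> by (simp add: complex_eq_iff)
    hence "p^2 = 0" using pu by simp
    thus False using p0 by simp
  qed
  have aRu: "\<bar>Re u\<bar> \<le> 1" using abs_Re_le_cmod[of u] u1 by simp
  have Reu: "Re u > -1" using u_ne aRu by arith
  have pab: "Re (p^2) = a^2 - b^2" "Im (p^2) = 2*a*b" by (simp_all add: a_def b_def power2_eq_square)
  have ab1: "a^2 - b^2 = 1 + Re u" using pab pu by simp
  have ab2: "2*a*b = Im u" using pab pu by simp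
  have a0: "a > 0" using rp a_def by simp
  have "(a^2+b^2)^2 = (a^2-b^2)^2 + (2*a*b)^2" by (simp add: power2_eq_square algebra_simps)
  also have "... = (1 + Re u)^2 + (Im u)^2" using ab1 ab2 by simp
  also have "... = 2 * (1 + Re u)" using uu by (simp add: power2_eq_square algebra_simps)
  also have "... = 2 * (a^2 - b^2)" using ab1 by simp
  finally have p4: "(a^2+b^2)^2 = 2*(a^2-b^2)" .
  have "(a^2+b^2)^2 \<le> (sqrt 2 * a)^2" using p4 by (simp add: power_mult_distrib)
  moreover have "0 \<le> sqrt 2 * a" using a0 by simp
  ultimately have pa: "a^2+b^2 \<le> sqrt 2 * a" by (rule power2_le_imp_le)
  have a2: "a \<le> sqrt 2"
  proof -
    have "a * a \<le> sqrt 2 * a" using pa zero_le_power2[of b] unfolding power2_eq_square by linarith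
    thus ?thesis using a0 by simp
  qed
  have ba: "b^2 \<le> a^2" using ab1 Reu by simp
  define W where "W = of_real \<beta> * p + of_real \<alpha>"
  have ReW: "Re W = \<beta>*a + \<alpha>" and ImW: "Im W = \<beta>*b" by (simp_all add: W_def a_def b_def)
  have ReW0: "Re W > 0" using ReW a0 be al by (simp add: add_pos_nonneg)
  have W0: "W \<noteq> 0" using ReW0 by auto
  have nW: "(Re W)^2 + (Im W)^2 \<le> (sqrt 2 * \<beta> + \<alpha>) * (\<beta>*a + \<alpha>)"
  proof -
    have "(Re W)^2 + (Im W)^2 = \<beta>^2*(a^2+b^2) + 2*\<alpha>*\<beta>*a + \<alpha>^2"
      unfolding ReW ImW by (simp add: power2_eq_square algebra_simps)
    also have "... \<le> \<beta>^2*(sqrt 2 * a) + 2*\<alpha>*\<beta>*a + \<alpha>^2"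
      using pa be by (simp add: mult_left_mono)
    also have "... \<le> (sqrt 2 * \<beta> + \<alpha>) * (\<beta>*a + \<alpha>)"
    proof -
      have "\<alpha>*\<beta>*a \<le> \<alpha>*\<beta> * sqrt 2" using a2 al be by (simp add: mult_left_mono)
      thus ?thesis by (simp add: power2_eq_square algebra_simps)
    qed
    finally show ?thesis .
  qed
  have ReinvW: "Re (1/W) \<ge> 2*c"
  proof -
    have pos: "(Re W)^2 + (Im W)^2 > 0" using ReW0 by (simp add: add_pos_nonneg)
    have "Re (1/W) = Re W / ((Re W)^2 + (Im W)^2)" by (simp add: Re_divide power2_eq_square)
    also have "... \<ge> Re W / ((sqrt 2 * \<beta> + \<alpha>) * (\<beta>*a + \<alpha>))"
      using nW pos ReW0 by (intro divide_left_mono) auto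
    also have "Re W / ((sqrt 2 * \<beta> + \<alpha>) * (\<beta>*a + \<alpha>)) = 2*c"
    proof -
      have "Re W / ((sqrt 2 * \<beta> + \<alpha>) * (\<beta>*a + \<alpha>)) = Re W / ((sqrt 2 * \<beta> + \<alpha>) * Re W)"
        using ReW by simp
      also have "... = 1 / (sqrt 2 * \<beta> + \<alpha>)" using ReW0 by simp
      also have "... = 2*c" using R by (simp add: c_def field_simps)
      finally show ?thesis .
    qed
    finally show ?thesis .
  qed
  define A where "A = 1 + cnj u"
  have ReA: "Re A = 1 + Re u" and ImA: "Im A = - Im u" by (simp_all add: A_def)
  have vA: "Re (v * A) \<ge> - c"
  proof -
    define X where "X = Re v" define Y where "Y = Im v"
    define Ar where "Ar = 1 + Re u" define Ai where "Ai = - Im u"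
    have ReVA: "Re (v * A) = X*Ar - Y*Ai" by (simp add: X_def Y_def Ar_def Ai_def ReA ImA)
    have Ai2: "Ai^2 = Ar*(2-Ar)" using uu by (simp add: Ai_def Ar_def power2_eq_square algebra_simps)
    have Ar0: "Ar \<ge> 0" "Ar \<le> 2" using aRu unfolding Ar_def by arith+
    have vv: "sqrt (X^2+Y^2) < X + c" using v by (simp add: cmod_def X_def Y_def c_def)
    have Xc: "X + c > 0" using vv real_sqrt_ge_zero[of "X^2+Y^2"] by (smt (verit) zero_le_power2)
    have "(sqrt (X^2+Y^2))^2 < (X+c)^2" using vv by (intro power_strict_mono) simp_all
    hence "X^2 + Y^2 < (X+c)^2" by simp
    hence Y2: "Y^2 \<le> 2*c*X + c^2" by (simp add: power2_eq_square algebra_simps)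
    have XA: "X*Ar + c \<ge> 0"
    proof (cases "X \<ge> 0")
      case True thus ?thesis using Ar0 c0 by simp
    next
      case False
      have "X > -c" using Xc by simp
      have "X*Ar \<ge> X*2" using False Ar0 by (simp add: mult_left_mono_neg)
      moreover have "X \<ge> -c/2"
      proof -
        have "0 \<le> c * (2*X + c)" using Y2 zero_le_power2[of Y] by (simp add: power2_eq_square algebra_simps) (smt (verit) zero_le_square)
        hence "0 \<le> 2*X + c" using c0 by (simp add: zero_le_mult_iff)
        thus ?thesis by simp
      qed
      ultimately show ?thesis by simp
    qed
    have "(Y*Ai)^2 \<le> (2*c*X + c^2) * (Ar*(2-Ar))"
      unfolding power_mult_distrib Ai2 using Ar0 Y2 by (intro mult_right_mono) auto
    also have "... = (X*Ar + c)^2 - (X*Ar + c*(Ar-1))^2" by (simp add: power2_eq_square algebra_simps)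
    also have "... \<le> (X*Ar + c)^2" by simp
    finally have "\<bar>Y*Ai\<bar>^2 \<le> (X*Ar + c)^2" by (simp only: power2_abs)
    hence "\<bar>Y*Ai\<bar> \<le> X*Ar + c" using XA by (rule power2_le_imp_le)
    thus ?thesis using ReVA by linarith
  qed
  have uc: "u * cnj u = 1" using u1 by (metis complex_norm_square mult.commute of_real_1 one_power2)
  have pu0: "1 + u \<noteq> 0" using u_ne by (auto simp: complex_eq_iff)
  define \<zeta> where "\<zeta> = v + of_real k * u / (2 * (1+u) * W)"
  have psz: "\<psi> = p * (1 + \<zeta>)"
    unfolding ps \<zeta>_def W_def[symmetric] pu[symmetric] using p0 W0 by (simp add: field_simps power2_eq_square)
  have zA: "\<zeta> * A = v * A + of_real k / (2 * W)"
  proof -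
    have uA: "u * A = 1 + u" using uc by (simp add: A_def algebra_simps)
    have "\<zeta> * A = v * A + (of_real k * u / (2*(1+u)*W)) * A" by (simp add: \<zeta>_def distrib_right)
    also have "(of_real k * u / (2*(1+u)*W)) * A = of_real k * (u * A) / ((1+u) * (2*W))" by (simp add: ac_simps)
    also have "... = of_real k * (1+u) / ((1+u) * (2*W))" using uA by simp
    also have "... = of_real k / (2*W)" using pu0 by simp
    finally show ?thesis .
  qed
  have ReZA: "Re (\<zeta> * A) \<ge> 0"
  proof -
    have e: "of_real k / (2 * W) = of_real k / W / 2" by simp
    have e2: "Re (of_real k / W) = k * Re (1/W)" by (simp add: Re_divide)
    have "Re (of_real k / (2 * W)) = k/2 * Re (1/W)"
      unfolding e Re_divide_numeral e2 by simp
    also have "... \<ge> k/2 * (2*c)" using ReinvW k by (intro mult_left_mono) auto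
    finally have "Re (of_real k / (2 * W)) \<ge> k * c" by simp
    moreover have "k * c \<ge> c" using k c0 by simp
    ultimately show ?thesis using vA zA by simp
  qed
  define E where "E = 1 / p^2"
  define w where "w = \<psi> / p"
  have E1: "E = A / of_real ((1 + Re u)^2 + (Im u)^2)"
  proof -
    have eq: "(1 + u) * A = of_real ((1 + Re u)^2 + (Im u)^2)"
      unfolding A_def by (simp add: complex_eq_iff power2_eq_square algebra_simps)
    have A0: "A \<noteq> 0" using pu0 unfolding A_def by (metis complex_cnj_one complex_cnj_add complex_cnj_zero_iff)
    have "A / of_real ((1 + Re u)^2 + (Im u)^2) = A / ((1 + u) * A)" by (simp only: eq)
    also have "... = 1 / (1 + u)" using A0 by simp
    finally show ?thesis unfolding E_def pu by simp
  qed
  have nn: "(1 + Re u)^2 + (Im u)^2 = 2 * (1 + Re u)" using uu by (simp add: power2_eq_square algebra_simps)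
  have ReE: "Re E = 1/2" unfolding E1 nn using Reu by (simp add: ReA)
  have wE: "w * E = E + \<zeta> * E" unfolding w_def E_def psz using p0 by (simp add: field_simps power2_eq_square)
  have "Re (\<zeta> * E) = Re (\<zeta> * A) / (2 * (1 + Re u))" unfolding E1 nn
    by (metis Re_divide_of_real times_divide_eq_right)
  hence "Re (\<zeta> * E) \<ge> 0" using ReZA Reu by simp
  moreover have "Re (w * E) = Re E + Re (\<zeta> * E)" unfolding wE by (simp only: plus_complex.sel)
  ultimately have ge: "Re (w * E) \<ge> 1/2" using ReE by linarith
  have ps2: "cmod (\<psi>^2 - 1) < 1" by (rule sps)
  note RI = Re_inv_half[OF ps2]
  have "E / w^2 = 1 / \<psi>^2" unfolding E_def w_def using p0 by (simp add: field_simps)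
  hence c1: "Re (E / w^2) > 1/2" using RI(1) by simp
  have Rew: "Re w > 0"
  proof -
    define x where "x = Re \<psi>" define y where "y = Im \<psi>"
    have "x^2 - y^2 > 0" using RI(2) by (simp add: x_def y_def power2_eq_square)
    have xy: "x > \<bar>y\<bar>"
    proof (rule ccontr)
      assume "\<not> x > \<bar>y\<bar>"
      hence "x^2 \<le> \<bar>y\<bar>^2" using rps x_def by (intro power_mono) auto
      thus False using \<open>x^2 - y^2 > 0\<close> by simp
    qed
    have ba': "\<bar>b\<bar> \<le> a" using ba a0 abs_le_square_iff[of b a] by simp
    have "x*a > \<bar>y\<bar>*a" using xy a0 by simp
    moreover have "\<bar>y\<bar>*a \<ge> \<bar>y\<bar>*\<bar>b\<bar>" using ba' by (simp add: mult_left_mono)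
    moreover have "y*b \<ge> - (\<bar>y\<bar>*\<bar>b\<bar>)" unfolding abs_mult[symmetric] by (simp add: abs_le_iff)
    ultimately have pos: "x*a + y*b > 0" by linarith
    have "Re w = (x*a + y*b) / (a^2+b^2)" unfolding w_def
      by (simp add: Re_divide x_def y_def a_def b_def power2_eq_square)
    moreover have "a^2+b^2 > 0" using a0 by (simp add: add_pos_nonneg)
    ultimately show ?thesis using pos by simp
  qed
  have "Re (w * E) < 1/2" using conv_cplx[OF ReE Rew c1] .
  thus False using ge by simp
qed


lemma Re_pos_conn:
  fixes f :: "complex \<Rightarrow> complex"
  assumes cont: "continuous_on S f" and conn: "connected S"
    and lob: "\<forall>z\<in>S. cmod ((f z)^2 - 1) < 1" and z1: "z1 \<in> S" and pos: "Re (f z1) > 0"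
  shows "\<forall>z\<in>S. Re (f z) > 0"
proof (rule ccontr)
  assume "\<not> (\<forall>z\<in>S. Re (f z) > 0)"
  then obtain z where z: "z \<in> S" "Re (f z) \<le> 0" by auto
  have c: "connected ((\<lambda>z. Re (f z)) ` S)"
    by (intro connected_continuous_image continuous_intros cont conn)
  have "(0::real) \<in> (\<lambda>z. Re (f z)) ` S"
    using c z z1 pos unfolding connected_iff_interval
    by (metis image_eqI less_eq_real_def)
  then obtain y where y: "y \<in> S" "Re (f y) = 0" by auto
  define t where "t = Im (f y)"
  have "f y = Complex 0 t" using y by (simp add: t_def complex_eq_iff)
  hence "(f y)^2 - 1 = of_real (- (t^2) - 1)" by (simp add: power2_eq_square complex_eq_iff)
  hence "cmod ((f y)^2 - 1) = \<bar>- (t^2) - 1\<bar>" by (simp only: norm_of_real)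
  also have "... = t^2 + 1" using zero_le_power2[of t] by linarith
  finally have "cmod ((f y)^2 - 1) = t^2 + 1" .
  moreover have "t^2 + 1 \<ge> 1" by simp
  ultimately show False using lob y by fastforce
qed

lemma mul_lt1:
  fixes r x :: real
  assumes "0 < r" "r < 1" "x < 1" "0 \<le> x"
  shows "r * x < 1" "r * x < r"
proof -
  show "r * x < r" using mult_strict_left_mono[of x 1 r] assms by simp
  thus "r * x < 1" using assms by linarith
qed

lemma jack:
  fixes \<omega> :: "complex \<Rightarrow> complex"
  assumes hol: "\<omega> holomorphic_on ball 0 1" and w0: "\<omega> 0 = 0"
    and r0: "0 < r0" "r0 < 1" and z0: "cmod z0 = r0"
    and lt: "\<forall>z. cmod z < r0 \<longrightarrow> cmod (\<omega> z) < 1"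
    and le: "\<forall>z. cmod z \<le> r0 \<longrightarrow> cmod (\<omega> z) \<le> 1"
    and u1: "cmod (\<omega> z0) = 1"
    and der: "(\<omega> has_field_derivative d) (at z0)"
  shows "\<exists>k\<ge>1. z0 * d = of_real k * \<omega> z0"
proof -
  define u where "u = \<omega> z0"
  define c where "c = cnj u"
  define K where "K = c * z0 * d"
  have cu: "c * u = 1" using u1 unfolding c_def u_def by (metis complex_norm_square mult.commute of_real_1 one_power2)
  have schw: "cmod (\<omega> (of_real t * z0)) \<le> t" if t: "0 \<le> t" "t < 1" for t :: real
  proof -
    define f where "f = (\<lambda>\<xi>. \<omega> (of_real r0 * \<xi>))"
    have holf: "f holomorphic_on ball 0 1" unfolding f_def
    proof (rule holomorphic_on_compose_gen[OF _ hol, unfolded o_def])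
      show "(*) (complex_of_real r0) holomorphic_on ball 0 1" by (intro holomorphic_intros)
      show "(*) (complex_of_real r0) ` ball 0 1 \<subseteq> ball 0 1"
        using r0 by (auto simp: norm_mult intro!: mul_lt1)
    qed
    have sch: "cmod (f \<xi>) \<le> cmod \<xi>" if "cmod \<xi> < 1" for \<xi>
    proof (rule Schwarz_Lemma(1)[OF holf])
      show "f 0 = 0" using w0 by (simp add: f_def)
      show "cmod (f z) < 1" if "cmod z < 1" for z
        using lt that r0 mul_lt1(2)[of r0 "cmod z"] by (simp add: f_def norm_mult)
      show "cmod \<xi> < 1" by fact
    qed
    define \<xi> where "\<xi> = of_real t * z0 / of_real r0"
    have n: "cmod \<xi> = t" using t z0 r0 by (simp add: \<xi>_def norm_mult norm_divide)
    have fe: "f \<xi> = \<omega> (of_real t * z0)" using r0 by (simp add: f_def \<xi>_def)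
    have "cmod (f \<xi>) \<le> cmod \<xi>" using sch[of \<xi>] n t by simp
    thus ?thesis using fe n by simp
  qed
  have ReK: "Re K \<ge> 1"
  proof (rule ccontr)
    assume "\<not> Re K \<ge> 1"
    define g where "g = (\<lambda>t::real. Re (c * \<omega> (z0 * of_real t)) - t)"
    have hd: "((\<lambda>x. c * \<omega> (z0 * x)) has_field_derivative K) (at (of_real 1))"
    proof -
      have "((\<lambda>x. \<omega> (z0 * x)) has_field_derivative d * z0) (at 1)"
        using DERIV_chain'[of "\<lambda>x. z0 * x" z0 1 UNIV \<omega> d] der by (auto intro!: derivative_eq_intros)
      thus ?thesis unfolding K_def by (auto intro!: derivative_eq_intros simp: ac_simps)
    qed
    have "((\<lambda>t. Re (c * \<omega> (z0 * of_real t))) has_field_derivative Re K) (at 1)"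
      by (rule has_field_derivative_Re[OF has_vector_derivative_real_field[OF hd]])
    hence gd: "(g has_field_derivative Re K - 1) (at 1)" unfolding g_def
      by (rule DERIV_diff[OF _ DERIV_ident])
    obtain \<delta> where \<delta>: "\<delta> > 0" "\<forall>h>0. h < \<delta> \<longrightarrow> g 1 < g (1 - h)"
      using DERIV_neg_dec_left[OF gd] \<open>\<not> Re K \<ge> 1\<close> by auto
    define h where "h = min (\<delta>/2) (1/2)"
    have h: "h > 0" "h < \<delta>" "h \<le> 1/2" using \<delta> by (auto simp: h_def)
    have g1: "g 1 = 0" proof -
      have "Re (c * u) = 1" by (simp add: cu)
      moreover have "g 1 = Re (c * u) - 1" unfolding g_def u_def by (simp only: of_real_1 mult_1_right)
      ultimately show ?thesis by simp
    qed
    have "g (1 - h) \<le> 0"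
    proof -
      have "Re (c * \<omega> (z0 * of_real (1-h))) \<le> cmod (c * \<omega> (z0 * of_real (1-h)))" by (rule complex_Re_le_cmod)
      also have "... = cmod (\<omega> (of_real (1-h) * z0))" using u1 by (simp add: c_def u_def norm_mult mult.commute)
      also have "... \<le> 1 - h" using h by (intro schw) auto
      finally show ?thesis by (simp add: g_def)
    qed
    thus False using \<delta> h g1 by force
  qed
  have ImK: "Im K = 0"
  proof -
    define G where "G = (\<lambda>s::real. Re (c * \<omega> (z0 * exp (\<i> * of_real s))))"
    have hd: "((\<lambda>x. c * \<omega> (z0 * exp (\<i> * x))) has_field_derivative \<i> * K) (at (of_real 0))"
    proof -
      have e: "((\<lambda>x. z0 * exp (\<i> * x)) has_field_derivative z0 * \<i>) (at 0)"
        by (auto intro!: derivative_eq_intros)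
      have "((\<lambda>x. \<omega> (z0 * exp (\<i> * x))) has_field_derivative d * (z0 * \<i>)) (at 0)"
        using DERIV_chain'[OF e, of \<omega> d] der by simp
      thus ?thesis unfolding K_def by (auto intro!: derivative_eq_intros simp: ac_simps)
    qed
    have Gd: "(G has_field_derivative Re (\<i> * K)) (at 0)" unfolding G_def
      by (rule has_field_derivative_Re[OF has_vector_derivative_real_field[OF hd]])
    have "Re (\<i> * K) = 0"
    proof (rule DERIV_local_max[OF Gd zero_less_one], intro allI impI)
      fix y :: real
      have "G y \<le> cmod (c * \<omega> (z0 * exp (\<i> * of_real y)))" unfolding G_def by (rule complex_Re_le_cmod)
      also have "... = cmod (\<omega> (z0 * exp (\<i> * of_real y)))" using u1 by (simp add: c_def u_def norm_mult)
      also have "... \<le> 1" using le z0 by (simp add: norm_mult)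
      also have "1 = G 0" proof -
        have "Re (c * u) = 1" by (simp add: cu)
        moreover have "G 0 = Re (c * u)" unfolding G_def u_def by simp
        ultimately show ?thesis by simp
      qed
      finally show "G y \<le> G 0" .
    qed
    thus ?thesis by simp
  qed
  have "K = of_real (Re K)" using ImK by (simp add: complex_eq_iff)
  moreover have "z0 * d = K * u" using cu unfolding K_def by (metis mult.assoc mult.commute mult_1_right)
  ultimately have "z0 * d = of_real (Re K) * \<omega> z0" by (simp add: u_def)
  thus ?thesis using ReK by blast
qed


theorem mainTheorem18:
  fixes Q p :: "complex \<Rightarrow> complex" and \<alpha> \<beta> :: real
  assumes "Q \<in> H11"
    and "\<alpha> \<ge> 0" and "\<beta> > 0"
    and "\<forall>z\<in>ball 0 1. cmod (Q z - 1) < Re (Q z - 1) + 1 / (2 * (sqrt 2 * \<beta> + \<alpha>))"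
    and "p holomorphic_on ball 0 1" and "p 0 = 1"
    and "\<forall>z\<in>ball 0 1. \<beta> * p z + \<alpha> \<noteq> 0"
    and "(\<lambda>z. p z * Q z + z * deriv p z / (\<beta> * p z + \<alpha>)) \<prec>\<^sub>D (\<lambda>z. csqrt (1 + z))"
  shows "p \<prec>\<^sub>D (\<lambda>z. csqrt (1 + z))"
proof -
  note al = assms(2) and be = assms(3) and Qc = assms(4) and holp = assms(5) and p0 = assms(6)
  obtain \<omega>1 where hol1: "\<omega>1 holomorphic_on ball 0 1" and im1: "\<omega>1 ` ball 0 1 \<subseteq> ball 0 1"
    and sub1: "\<forall>z\<in>ball 0 1. p z * Q z + z * deriv p z / (\<beta> * p z + \<alpha>) = csqrt (1 + \<omega>1 z)"
    using assms(8) unfolding subordinate_def by blast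
  define \<omega> where "\<omega> = (\<lambda>z. (p z)^2 - 1)"
  have hol: "\<omega> holomorphic_on ball 0 1" unfolding \<omega>_def using holp by (intro holomorphic_intros)
  have cont: "continuous_on (ball 0 1) \<omega>" using hol by (rule holomorphic_on_imp_continuous_on)
  have contp: "continuous_on (ball 0 1) p" using holp by (rule holomorphic_on_imp_continuous_on)
  have w0: "\<omega> 0 = 0" using p0 by (simp add: \<omega>_def)
  have main: "\<forall>z\<in>ball 0 1. cmod (\<omega> z) < 1"
  proof (rule ccontr)
    assume "\<not> (\<forall>z\<in>ball 0 1. cmod (\<omega> z) < 1)"
    then obtain z1 where z1: "z1 \<in> ball 0 1" "cmod (\<omega> z1) \<ge> 1" by auto
    define S where "S = cball 0 (cmod z1) \<inter> \<omega> -` {w. 1 \<le> cmod w}"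
    have sub: "cball 0 (cmod z1) \<subseteq> ball 0 1" using z1 by auto
    have "closed S" unfolding S_def
      by (intro continuous_closed_preimage continuous_on_subset[OF cont sub] closed_cball)
         (intro closed_Collect_le continuous_intros)
    have "bounded S" unfolding S_def by (rule bounded_subset[OF bounded_cball]) auto
    hence cS: "compact S" using \<open>closed S\<close> compact_eq_bounded_closed by blast
    have z1S: "z1 \<in> S" using z1 by (simp add: S_def)
    have "continuous_on S (\<lambda>z. cmod z)" by (intro continuous_intros)
    then obtain z0 where z0S: "z0 \<in> S" and z0min: "\<forall>y\<in>S. cmod z0 \<le> cmod y"
      using continuous_attains_inf[OF cS] z1S by blast
    define r0 where "r0 = cmod z0"
    have z0z1: "cmod z0 \<le> cmod z1" and wz0: "1 \<le> cmod (\<omega> z0)" using z0S by (auto simp: S_def)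
    have r01: "r0 < 1" using z0z1 z1 by (simp add: r0_def)
    have "z0 \<noteq> 0" using wz0 w0 by auto
    hence r00: "r0 > 0" by (simp add: r0_def)
    have z0in: "z0 \<in> ball 0 1" using r01 by (simp add: r0_def)
    have lt: "\<forall>z. cmod z < r0 \<longrightarrow> cmod (\<omega> z) < 1"
    proof (intro allI impI)
      fix z assume zr: "cmod z < r0"
      show "cmod (\<omega> z) < 1"
      proof (rule ccontr)
        assume "\<not> cmod (\<omega> z) < 1"
        hence "z \<in> S" using zr z0z1 by (simp add: S_def r0_def)
        thus False using z0min zr by (auto simp: r0_def)
      qed
    qed
    have cb: "cball 0 r0 \<subseteq> ball 0 1" using r01 by auto
    have le: "\<forall>z. cmod z \<le> r0 \<longrightarrow> cmod (\<omega> z) \<le> 1"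
    proof (intro allI impI)
      fix z assume zr: "cmod z \<le> r0"
      show "cmod (\<omega> z) \<le> 1"
      proof (rule continuous_le_on_closure[of "ball 0 r0" "\<lambda>z. cmod (\<omega> z)"])
        show "continuous_on (closure (ball 0 r0)) (\<lambda>z. cmod (\<omega> z))"
          using r00 by (auto intro!: continuous_intros continuous_on_subset[OF cont cb])
        show "z \<in> closure (ball 0 r0)" using r00 zr by simp
        show "cmod (\<omega> x) \<le> 1" if "x \<in> ball 0 r0" for x using lt that by fastforce
      qed
    qed
    have u1: "cmod (\<omega> z0) = 1" using le wz0 by (simp add: r0_def) (smt (verit) order_refl)
    have dp: "(p has_field_derivative deriv p z0) (at z0)"
      using holomorphic_derivI[OF holp open_ball z0in] .
    have dw: "(\<omega> has_field_derivative 2 * p z0 * deriv p z0) (at z0)"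
      unfolding \<omega>_def by (auto intro!: derivative_eq_intros dp)
    obtain k where k: "k \<ge> 1" and jk: "z0 * (2 * p z0 * deriv p z0) = of_real k * \<omega> z0"
      using jack[OF hol w0 r00 r01 _ lt le u1 dw] r0_def by auto
    have Rpb: "\<forall>z\<in>ball 0 r0. Re (p z) > 0"
    proof (rule Re_pos_conn)
      show "continuous_on (ball 0 r0) p" using contp by (rule continuous_on_subset) (use r01 in auto)
      show "connected (ball (0::complex) r0)" by (rule convex_connected[OF convex_ball])
      show "\<forall>z\<in>ball 0 r0. cmod ((p z)^2 - 1) < 1" using lt by (simp add: \<omega>_def)
      show "0 \<in> ball 0 r0" using r00 by simp
      show "Re (p 0) > 0" using p0 by simp
    qed
    have Rp0: "Re (p z0) \<ge> 0"
    proof (rule continuous_ge_on_closure[of "ball 0 r0" "\<lambda>z. Re (p z)"])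
      show "continuous_on (closure (ball 0 r0)) (\<lambda>z. Re (p z))"
        using r00 by (auto intro!: continuous_intros continuous_on_subset[OF contp cb])
      show "z0 \<in> closure (ball 0 r0)" using r00 by (simp add: r0_def)
      show "Re (p x) \<ge> 0" if "x \<in> ball 0 r0" for x using Rpb that by fastforce
    qed
    have pz0: "p z0 \<noteq> 0"
    proof
      assume "p z0 = 0"
      hence "of_real k * \<omega> z0 = 0" using jk by simp
      thus False using k u1 by auto
    qed
    have Rp: "Re (p z0) > 0"
    proof (rule ccontr)
      assume "\<not> Re (p z0) > 0"
      hence "Re (p z0) = 0" using Rp0 by simp
      define t where "t = Im (p z0)"
      have "p z0 = Complex 0 t" using \<open>Re (p z0) = 0\<close> by (simp add: t_def complex_eq_iff)
      hence "\<omega> z0 = of_real (- (t^2) - 1)" by (simp add: \<omega>_def power2_eq_square complex_eq_iff)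
      hence "cmod (\<omega> z0) = \<bar>- (t^2) - 1\<bar>" by (simp only: norm_of_real)
      also have "... = t^2 + 1" using zero_le_power2[of t] by linarith
      finally have "t^2 = 0" using u1 by simp
      hence "p z0 = 0" using \<open>p z0 = Complex 0 t\<close> by (simp add: complex_eq_iff)
      thus False using pz0 by simp
    qed
    define \<psi> where "\<psi> = p z0 * Q z0 + z0 * deriv p z0 / (\<beta> * p z0 + \<alpha>)"
    have ps1: "\<psi> = csqrt (1 + \<omega>1 z0)" using sub1 z0in by (simp add: \<psi>_def)
    have "\<omega>1 z0 \<in> ball 0 1" using im1 z0in by blast
    hence sps: "cmod (\<psi>^2 - 1) < 1" using ps1 by simp
    have rps: "Re \<psi> \<ge> 0" unfolding ps1 by (rule Re_csqrt)
    have dz: "z0 * deriv p z0 = of_real k * \<omega> z0 / (2 * p z0)"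
      using jk pz0 by (simp add: field_simps)
    have psf: "\<psi> = p z0 * (1 + (Q z0 - 1)) + of_real k * \<omega> z0 / (2 * p z0 * (of_real \<beta> * p z0 + of_real \<alpha>))"
      unfolding \<psi>_def dz by simp
    have pu: "(p z0)^2 = 1 + \<omega> z0" by (simp add: \<omega>_def)
    have vq: "cmod (Q z0 - 1) < Re (Q z0 - 1) + 1 / (2 * (sqrt 2 * \<beta> + \<alpha>))"
      using Qc z0in by blast
    show False using core[OF u1 pu Rp k al be vq psf rps sps] .
  qed
  have Rp: "\<forall>z\<in>ball 0 1. Re (p z) > 0"
  proof (rule Re_pos_conn)
    show "continuous_on (ball 0 1) p" by (rule contp)
    show "connected (ball (0::complex) 1)" by (rule convex_connected[OF convex_ball])
    show "\<forall>z\<in>ball 0 1. cmod ((p z)^2 - 1) < 1" using main by (simp add: \<omega>_def)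
    show "(0::complex) \<in> ball 0 1" by simp
    show "Re (p 0) > 0" using p0 by simp
  qed
  show ?thesis unfolding subordinate_def
  proof (intro exI conjI)
    show "\<omega> holomorphic_on ball 0 1" by (rule hol)
    show "\<omega> ` ball 0 1 \<subseteq> ball 0 1" using main by auto
    show "\<omega> 0 = 0" by (rule w0)
    show "\<forall>z\<in>ball 0 1. p z = csqrt (1 + \<omega> z)"
    proof
      fix z :: complex assume "z \<in> ball 0 1"
      hence "Re (p z) > 0" using Rp by blast
      hence "csqrt ((p z)^2) = p z" by (intro csqrt_square) simp
      thus "p z = csqrt (1 + \<omega> z)" by (simp add: \<omega>_def)
    qed
  qed
qed

end
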